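(* Let $n\ge1$, let $H,K\le S_n$, and let $\phi:H\to\mathbb C$, $\psi:K\to\mathbb C$ be arbitrary functions. The following are equivalent: (1) $d_\phi^H(A)=d_\psi^K(A)$ for every $A\in\mathbb S_n(\mathbb C)$; (2) $d_\phi^H(S_\sigma)=d_\psi^K(S_\sigma)$ for every $\sigma\in S_n$; (3) $\sum_{\tau\in[\sigma]}\hat\phi(\tau)=\sum_{\tau\in[\sigma]}\hat\psi(\tau)$ for every $\sigma\in S_n$.
   Context: $S_n$ is the symmetric group on $[n]$; $\mathbb S_n(\mathbb C)$ is the set of complex symmetric $n\times n$ matrices. For $G\le S_n$ and $\chi:G\to\mathbb C$, $\hat\chi:S_n\to\mathbb C$ is the extension of $\chi$ by $0$ outside $G$, and $d_\chi^G(A)=\sum_{\sigma\in S_n}\hat\chi(\sigma)\prod_{i=1}^n A_{i\,\sigma(i)}$ for $A\in M_n(\mathbb C)$. For $\sigma\in S_n$, $S_\sigma$ is the $n\times n$ $0/1$ matrix with $(S_\sigma)_{ij}=1$ iff $\sigma(i)=j$ or $\sigma^{-1}(i)=j$. If $\sigma=\sigma_1\cdots\sigma_k$ is the decomposition of $\sigma$ into pairwise disjoint cycles of length at least $2$, then $[\sigma]=\{\sigma_1^{n_1}\cdots\sigma_k^{n_k}:n_j\in\{1,-1\}\}$ (a set; $[\mathrm{id}]=\{\mathrm{id}\}$). *)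

theory Defs
  imports Complex_Main "HOL-Algebra.Sym_Groups"
begin

(* S_n = carrier (sym_group n) = {p. p permutes {1..n}} *)

definition ext0 :: "(nat \<Rightarrow> nat) set \<Rightarrow> ((nat \<Rightarrow> nat) \<Rightarrow> complex) \<Rightarrow> (nat \<Rightarrow> nat) \<Rightarrow> complex" where
  "ext0 G chi = (\<lambda>s. if s \<in> G then chi s else 0)"

(* generalized matrix function d_chi^G; matrices are indexed by {1..n} *)
definition gen_matrix_fun :: "nat \<Rightarrow> (nat \<Rightarrow> nat) set \<Rightarrow> ((nat \<Rightarrow> nat) \<Rightarrow> complex)
    \<Rightarrow> (nat \<Rightarrow> nat \<Rightarrow> complex) \<Rightarrow> complex" where
  "gen_matrix_fun n G chi A =
     (\<Sum>s\<in>carrier (sym_group n). ext0 G chi s * (\<Prod>i=1..n. A i (s i)))"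

definition sym_matrix :: "nat \<Rightarrow> (nat \<Rightarrow> nat \<Rightarrow> complex) \<Rightarrow> bool" where
  "sym_matrix n A \<longleftrightarrow> (\<forall>i\<in>{1..n}. \<forall>j\<in>{1..n}. A i j = A j i)"

definition S_mat :: "(nat \<Rightarrow> nat) \<Rightarrow> nat \<Rightarrow> nat \<Rightarrow> complex" where
  "S_mat s = (\<lambda>i j. if s i = j \<or> Hilbert_Choice.inv s i = j then 1 else 0)"

definition cycle_through :: "(nat \<Rightarrow> nat) \<Rightarrow> nat \<Rightarrow> nat \<Rightarrow> nat" where
  "cycle_through s x = (\<lambda>y. if \<exists>k. (s ^^ k) x = y then s y else y)"

definition cycles_of :: "nat \<Rightarrow> (nat \<Rightarrow> nat) \<Rightarrow> (nat \<Rightarrow> nat) set" where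
  "cycles_of n s = {cycle_through s x | x. x \<in> {1..n} \<and> s x \<noteq> x}"

(* [s] = { s_1^{\<pm>1} ... s_k^{\<pm>1} }; True means exponent 1, False exponent -1 *)
definition cycle_class :: "nat \<Rightarrow> (nat \<Rightarrow> nat) \<Rightarrow> (nat \<Rightarrow> nat) set" where
  "cycle_class n s = {t. \<exists>cs es. distinct cs \<and> set cs = cycles_of n s \<and> length es = length cs \<and>
      t = foldr (\<lambda>(c, e) acc. (if e then c else Hilbert_Choice.inv c) \<circ> acc) (zip cs es) id}"

end

theory Submission
  imports Defs
begin


definition orb :: "(nat \<Rightarrow> nat) \<Rightarrow> nat \<Rightarrow> nat set" where
  "orb s x = {y. \<exists>k. (s ^^ k) x = y}"

lemma orb_self: "x \<in> orb s x"
  unfolding orb_def by (auto intro: exI[of _ 0])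

lemma orb_s: "y \<in> orb s x \<Longrightarrow> s y \<in> orb s x"
proof -
  assume "y \<in> orb s x"
  then obtain k where "(s ^^ k) x = y" unfolding orb_def by auto
  then have "(s ^^ Suc k) x = s y" by simp
  then show ?thesis unfolding orb_def by blast
qed

lemma orb_trans: "y \<in> orb s x \<Longrightarrow> z \<in> orb s y \<Longrightarrow> z \<in> orb s x"
proof -
  assume "y \<in> orb s x" "z \<in> orb s y"
  then obtain k j where "(s ^^ k) x = y" "(s ^^ j) y = z" unfolding orb_def by auto
  then have "(s ^^ (j + k)) x = z" by (simp add: funpow_add)
  then show ?thesis unfolding orb_def by blast
qed

lemma orb_inv:
  assumes p: "s permutes {1..(n::nat)}" and y: "y \<in> orb s x"
  shows "Hilbert_Choice.inv s y \<in> orb s x"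
proof -
  obtain k where k: "(s ^^ k) x = y" using y unfolding orb_def by auto
  show ?thesis
  proof (cases k)
    case (Suc m)
    then have "y = s ((s ^^ m) x)" using k by simp
    then have "Hilbert_Choice.inv s y = (s ^^ m) x" using permutes_inverses[OF p] by simp
    then show ?thesis unfolding orb_def by auto
  next
    case 0
    have "permutation s" using p by (meson finite_atLeastAtMost permutation_permutes)
    then obtain p' where p': "s ^^ p' = id" "p' > 0" by (rule permutation_is_nilpotent)
    then obtain m where m: "p' = Suc m" by (cases p') auto
    have "x = s ((s ^^ m) x)" using p' m by (metis funpow.simps(2) comp_apply id_apply)
    then have "Hilbert_Choice.inv s x = (s ^^ m) x" using permutes_inverses[OF p] by metis
    then show ?thesis using 0 k unfolding orb_def by auto
  qed
qed

lemma orb_sym: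
  assumes p: "s permutes {1..(n::nat)}" and y: "y \<in> orb s x"
  shows "x \<in> orb s y"
proof -
  obtain k where k: "(s ^^ k) x = y" using y unfolding orb_def by auto
  have a: "((Hilbert_Choice.inv s) ^^ j) y \<in> orb s y" for j
    by (induction j) (auto simp: orb_self orb_inv[OF p])
  have b: "((Hilbert_Choice.inv s) ^^ j) ((s ^^ j) z) = z" for j z
  proof (induction j arbitrary: z)
    case (Suc j)
    have "((Hilbert_Choice.inv s) ^^ Suc j) ((s ^^ Suc j) z) = ((Hilbert_Choice.inv s) ^^ j) (Hilbert_Choice.inv s ((s ^^ Suc j) z))"
      by (simp only: funpow_Suc_right o_apply)
    also have "\<dots> = ((Hilbert_Choice.inv s) ^^ j) ((s ^^ j) z)" by (simp add: permutes_inverses[OF p])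
    finally show ?case using Suc by simp
  qed simp
  show ?thesis using a[of k] b[of k x] k by simp
qed

lemma orb_eq:
  assumes p: "s permutes {1..(n::nat)}" and y: "y \<in> orb s x"
  shows "orb s y = orb s x"
  using orb_trans[OF y] orb_trans[OF orb_sym[OF p y]] by blast

lemma orb_fixed: "s y = y \<Longrightarrow> orb s y = {y}"
proof -
  assume "s y = y"
  then have "(s ^^ k) y = y" for k by (induction k) auto
  then show ?thesis unfolding orb_def by auto
qed

lemma orb_nonfixed:
  assumes p: "s permutes {1..(n::nat)}" and y: "y \<in> orb s x" and x: "s x \<noteq> x"
  shows "s y \<noteq> y"
proof
  assume "s y = y"
  then have "orb s y = {y}" by (rule orb_fixed)
  then have "x = y" using orb_sym[OF p y] by auto
  then show False using x `s y = y` by simp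
qed


definition mv :: "(nat \<Rightarrow> nat) \<Rightarrow> nat set" where "mv f = {y. f y \<noteq> y}"

lemma ct_alt: "cycle_through s x y = (if y \<in> orb s x then s y else y)"
  unfolding cycle_through_def orb_def by auto

lemma ct_bij:
  assumes p: "s permutes {1..(n::nat)}"
  shows "bij (cycle_through s x)"
proof (rule o_bij)
  let ?g = "\<lambda>y. if y \<in> orb s x then Hilbert_Choice.inv s y else y"
  show "?g \<circ> cycle_through s x = id"
    by (auto simp: fun_eq_iff ct_alt orb_s permutes_inverses[OF p])
  show "cycle_through s x \<circ> ?g = id"
    by (auto simp: fun_eq_iff ct_alt orb_inv[OF p] permutes_inverses[OF p])
qed

lemma ct_mv:
  assumes p: "s permutes {1..(n::nat)}" and x: "s x \<noteq> x"
  shows "mv (cycle_through s x) = orb s x"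
  using orb_nonfixed[OF p _ x] by (auto simp: mv_def ct_alt)

lemma ct_inv:
  assumes p: "s permutes {1..(n::nat)}" and y: "y \<in> orb s x"
  shows "Hilbert_Choice.inv (cycle_through s x) y = Hilbert_Choice.inv s y"
proof -
  have "cycle_through s x (Hilbert_Choice.inv s y) = y"
    using orb_inv[OF p y] by (simp add: ct_alt permutes_inverses[OF p])
  then show ?thesis using bij_inv_eq_iff[OF ct_bij[OF p]] by metis
qed

lemma ct_eq: "orb s x = orb s x' \<Longrightarrow> cycle_through s x = cycle_through s x'"
  by (simp add: fun_eq_iff ct_alt)

lemma inv_fix: "bij c \<Longrightarrow> c z = z \<Longrightarrow> Hilbert_Choice.inv c z = z"
  by (metis bij_inv_eq_iff)

definition FF :: "(nat \<Rightarrow> nat) list \<Rightarrow> bool list \<Rightarrow> nat \<Rightarrow> nat" where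
  "FF cs es = foldr (\<lambda>(c, e) acc. (if e then c else Hilbert_Choice.inv c) \<circ> acc) (zip cs es) id"

lemma FF_eval:
  assumes "length cs = length es" "distinct cs" "\<forall>c\<in>set cs. bij c"
    "\<forall>c\<in>set cs. \<forall>d\<in>set cs. c \<noteq> d \<longrightarrow> mv c \<inter> mv d = {}"
    "\<forall>c\<in>set cs. c ` mv c \<subseteq> mv c \<and> Hilbert_Choice.inv c ` mv c \<subseteq> mv c"
  shows "bij (FF cs es) \<and> (\<forall>y. (\<forall>c\<in>set cs. y \<notin> mv c) \<longrightarrow> FF cs es y = y) \<and>
     (\<forall>y c e. (c,e) \<in> set (zip cs es) \<and> y \<in> mv c \<longrightarrow> FF cs es y = (if e then c else Hilbert_Choice.inv c) y)"
  using assms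
proof (induction cs es rule: list_induct2)
  case Nil
  then show ?case by (simp add: FF_def bij_id[unfolded id_def])
next
  case (Cons c cs e es)
  let ?g = "if e then c else Hilbert_Choice.inv c"
  have FFc: "FF (c # cs) (e # es) = ?g \<circ> FF cs es" by (simp add: FF_def)
  have IH: "bij (FF cs es) \<and> (\<forall>y. (\<forall>c\<in>set cs. y \<notin> mv c) \<longrightarrow> FF cs es y = y) \<and>
     (\<forall>y c e. (c,e) \<in> set (zip cs es) \<and> y \<in> mv c \<longrightarrow> FF cs es y = (if e then c else Hilbert_Choice.inv c) y)"
    using Cons by auto
  have bc: "bij c" using Cons by auto
  have gbij: "bij ?g" using bc by (simp add: bij_imp_bij_inv)
  have gfix: "?g z = z" if "z \<notin> mv c" for z
    using that inv_fix[OF bc] by (auto simp: mv_def)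
  have disj: "y \<notin> mv c" if "d \<in> set cs" "y \<in> mv d" for d y
    using Cons.prems(1,3) that by auto
  have A: "bij (FF (c # cs) (e # es))" using FFc IH gbij bij_comp by metis
  have B: "FF (c # cs) (e # es) y = y" if "\<forall>c'\<in>set (c#cs). y \<notin> mv c'" for y
    using that IH gfix FFc by simp
  have C: "FF (c # cs) (e # es) y = (if e' then c' else Hilbert_Choice.inv c') y"
    if ce: "(c',e') \<in> set (zip (c#cs) (e#es))" "y \<in> mv c'" for y c' e'
  proof (cases "(c',e') = (c,e)")
    case True
    have "y \<in> mv c" using True ce(2) by simp
    then have "\<forall>d\<in>set cs. y \<notin> mv d" using disj by blast
    then have "FF cs es y = y" using IH by blast
    then show ?thesis using FFc True by simp
  next
    case False
    then have ce': "(c',e') \<in> set (zip cs es)" using ce(1) by auto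
    then have cs': "c' \<in> set cs" by (meson in_set_zipE)
    have e1: "FF cs es y = (if e' then c' else Hilbert_Choice.inv c') y" using IH ce' ce(2) by blast
    have "(if e' then c' else Hilbert_Choice.inv c') y \<in> mv c'"
      proof -
        have "c' ` mv c' \<subseteq> mv c' \<and> Hilbert_Choice.inv c' ` mv c' \<subseteq> mv c'" using Cons.prems(4) cs' by simp
        then show ?thesis using ce(2) by auto
      qed
    then have "(if e' then c' else Hilbert_Choice.inv c') y \<notin> mv c" using disj cs' by blast
    then show ?thesis using FFc e1 gfix by simp
  qed
  show ?case using A B C by blast
qed


abbreviation hinv :: "(nat \<Rightarrow> nat) \<Rightarrow> nat \<Rightarrow> nat" where "hinv \<equiv> Hilbert_Choice.inv"

definition nb :: "(nat \<Rightarrow> nat) \<Rightarrow> nat \<Rightarrow> nat set" where "nb t i = {t i, hinv t i}"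

definition Cl :: "nat \<Rightarrow> (nat \<Rightarrow> nat) \<Rightarrow> (nat \<Rightarrow> nat) set" where
  "Cl n s = {t. t permutes {1..n} \<and> (\<forall>i. nb t i = nb s i)}"

lemma inv_step:
  assumes t: "t permutes {1..(n::nat)}" and s: "s permutes {1..n}"
    and e: "\<forall>i. nb t i = nb s i" and ti: "t i \<noteq> s i"
  shows "t (s i) \<noteq> s (s i)"
proof
  assume tj: "t (s i) = s (s i)"
  have ti2: "t i = hinv s i" "hinv s i \<noteq> s i"
    using e[rule_format, of i] ti unfolding nb_def by (auto simp: doubleton_eq_iff)
  have "nb t (s i) = nb s (s i)" using e by blast
  then have "{s (s i), hinv t (s i)} = {s (s i), i}"
    unfolding nb_def using tj permutes_inverses[OF s] by simp
  show False
  proof (cases "s (s i) = i")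
    case True
    then have "hinv s i = s i" using permutes_inverses[OF s] by metis
    then show False using ti2 by simp
  next
    case False
    then have "hinv t (s i) = i" using `{s (s i), hinv t (s i)} = {s (s i), i}` by (auto simp: doubleton_eq_iff)
    then have "t i = s i" using permutes_inverses[OF t] by metis
    then show False using ti by simp
  qed
qed

lemma inv_iter:
  assumes t: "t permutes {1..(n::nat)}" and s: "s permutes {1..n}"
    and e: "\<forall>i. nb t i = nb s i" and ti: "t z \<noteq> s z"
  shows "t ((s ^^ k) z) \<noteq> s ((s ^^ k) z)"
proof (induction k)
  case (Suc k)
  have "t (s ((s ^^ k) z)) \<noteq> s (s ((s ^^ k) z))" by (rule inv_step[OF t s e Suc.IH])
  then show ?case by simp
qed (use ti in simp)

lemma cyc_mem: "c \<in> cycles_of n s \<Longrightarrow> \<exists>x. c = cycle_through s x \<and> s x \<noteq> x"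
  unfolding cycles_of_def by auto

lemma cyc_in: "s permutes {1..n} \<Longrightarrow> s y \<noteq> y \<Longrightarrow> cycle_through s y \<in> cycles_of n s"
  unfolding cycles_of_def using permutes_not_in by fastforce

lemma cyc_fin: "finite (cycles_of n s)"
proof -
  have "cycles_of n s = cycle_through s ` {x. x \<in> {1..n} \<and> s x \<noteq> x}"
    unfolding cycles_of_def by auto
  then show ?thesis by simp
qed

lemma cyc_props:
  assumes s: "s permutes {1..(n::nat)}" and c: "c \<in> cycles_of n s"
  shows "bij c" "c ` mv c \<subseteq> mv c" "hinv c ` mv c \<subseteq> mv c" "y \<in> mv c \<Longrightarrow> s y \<noteq> y"
    "y \<in> mv c \<Longrightarrow> c y = s y" "y \<in> mv c \<Longrightarrow> hinv c y = hinv s y"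
    "y \<in> mv c \<Longrightarrow> s y \<in> mv c" "y \<in> mv c \<Longrightarrow> hinv s y \<in> mv c"
    "y \<in> mv c \<Longrightarrow> c = cycle_through s y"
proof -
  obtain x where x: "c = cycle_through s x" "s x \<noteq> x" using cyc_mem[OF c] by blast
  have m: "mv c = orb s x" using ct_mv[OF s x(2)] x(1) by simp
  show "bij c" using ct_bij[OF s] x by simp
  have cy: "c y = s y" if "y \<in> orb s x" for y using that x(1) by (simp add: ct_alt)
  have ciy: "hinv c y = hinv s y" if "y \<in> orb s x" for y using that x(1) ct_inv[OF s] by simp
  show "c ` mv c \<subseteq> mv c" unfolding m using cy orb_s by auto
  show "hinv c ` mv c \<subseteq> mv c" unfolding m using ciy orb_inv[OF s] by auto
  show "y \<in> mv c \<Longrightarrow> s y \<noteq> y" using m orb_nonfixed[OF s _ x(2)] by blast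
  show "y \<in> mv c \<Longrightarrow> c y = s y" using m cy by simp
  show "y \<in> mv c \<Longrightarrow> hinv c y = hinv s y" using m ciy by simp
  show "y \<in> mv c \<Longrightarrow> s y \<in> mv c" using m by (simp add: orb_s)
  show "y \<in> mv c \<Longrightarrow> hinv s y \<in> mv c" using m by (simp add: orb_inv[OF s])
  show "y \<in> mv c \<Longrightarrow> c = cycle_through s y" using m x ct_eq orb_eq[OF s] by metis
qed

lemma cyc_disj:
  assumes s: "s permutes {1..(n::nat)}" and c: "c \<in> cycles_of n s" and d: "d \<in> cycles_of n s"
    and cd: "c \<noteq> d"
  shows "mv c \<inter> mv d = {}"
  using cyc_props(9)[OF s c] cyc_props(9)[OF s d] cd by blast


lemma cc_sub:
  assumes s: "s permutes {1..(n::nat)}" and t: "t \<in> cycle_class n s"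
  shows "t \<in> Cl n s"
proof -
  obtain cs es where cs: "distinct cs" "set cs = cycles_of n s" "length es = length cs"
    and tF: "t = FF cs es" using t unfolding cycle_class_def FF_def by blast
  have ev: "bij (FF cs es) \<and> (\<forall>y. (\<forall>c\<in>set cs. y \<notin> mv c) \<longrightarrow> FF cs es y = y) \<and>
     (\<forall>y c e. (c,e) \<in> set (zip cs es) \<and> y \<in> mv c \<longrightarrow> FF cs es y = (if e then c else hinv c) y)"
    apply (rule FF_eval)
    using cs cyc_props[OF s] cyc_disj[OF s] by auto
  have bt: "bij t" using ev tF by simp
  have fx: "t y = y" if "s y = y" for y
    using ev tF cs(2) cyc_props(4)[OF s] that by blast
  have evc: "t y = (if e then c else hinv c) y" if "(c,e) \<in> set (zip cs es)" "y \<in> mv c" for c e y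
    using ev tF that by blast
  have perm: "t permutes {1..n}"
    unfolding permutes_def using fx permutes_not_in[OF s] bt by (auto simp: bij_iff)
  have "nb t i = nb s i" for i
  proof (cases "s i = i")
    case True
    then have "hinv s i = i" using inv_fix[OF permutes_bij[OF s]] by simp
    moreover have "t i = i" using fx True by simp
    moreover then have "hinv t i = i" using inv_fix[OF bt] by simp
    ultimately show ?thesis unfolding nb_def using True by simp
  next
    case False
    define c where "c = cycle_through s i"
    have cc: "c \<in> cycles_of n s" using cyc_in[OF s False] c_def by simp
    then obtain j where j: "j < length cs" "cs ! j = c" using cs(2) by (metis in_set_conv_nth)
    define e where "e = es ! j"
    have ce: "(c, e) \<in> set (zip cs es)" using j cs(3) e_def by (auto simp: set_zip)
    have im: "i \<in> mv c" using ct_mv[OF s False] orb_self c_def by simp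
    show ?thesis
    proof (cases e)
      case True
      have "t i = s i" using evc[OF ce im] True cyc_props(5)[OF s cc im] by simp
      moreover have "t (hinv s i) = i"
        using evc[OF ce cyc_props(8)[OF s cc im]] True cyc_props(5)[OF s cc cyc_props(8)[OF s cc im]]
          permutes_inverses[OF s] by simp
      then have "hinv t i = hinv s i" using bij_inv_eq_iff[OF bt] by metis
      ultimately show ?thesis unfolding nb_def by simp
    next
      case False
      have "t i = hinv s i" using evc[OF ce im] False cyc_props(6)[OF s cc im] by simp
      moreover have "t (s i) = i"
        using evc[OF ce cyc_props(7)[OF s cc im]] False cyc_props(6)[OF s cc cyc_props(7)[OF s cc im]]
          permutes_inverses[OF s] by simp
      then have "hinv t i = s i" using bij_inv_eq_iff[OF bt] by metis
      ultimately show ?thesis unfolding nb_def by auto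
    qed
  qed
  then show ?thesis unfolding Cl_def using perm by blast
qed

lemma zip_map_self: "c \<in> set cs \<Longrightarrow> (c, E c) \<in> set (zip cs (map E cs))"
  by (induction cs) auto

lemma cc_sup:
  assumes s: "s permutes {1..(n::nat)}" and t: "t \<in> Cl n s"
  shows "t \<in> cycle_class n s"
proof -
  have tp: "t permutes {1..n}" and e: "\<forall>i. nb t i = nb s i" using t unfolding Cl_def by auto
  obtain cs where cs: "set cs = cycles_of n s" "distinct cs"
    using finite_distinct_list[OF cyc_fin] by blast
  define E where "E c = (\<forall>y. c y \<noteq> y \<longrightarrow> t y = c y)" for c
  define es where "es = map E cs"
  have len: "length es = length cs" unfolding es_def by simp
  have ev: "bij (FF cs es) \<and> (\<forall>y. (\<forall>c\<in>set cs. y \<notin> mv c) \<longrightarrow> FF cs es y = y) \<and>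
     (\<forall>y c e. (c,e) \<in> set (zip cs es) \<and> y \<in> mv c \<longrightarrow> FF cs es y = (if e then c else hinv c) y)"
    apply (rule FF_eval)
    using cs len cyc_props[OF s] cyc_disj[OF s] by auto
  have "t y = FF cs es y" for y
  proof (cases "s y = y")
    case True
    then have "nb t y = {y}" using e inv_fix[OF permutes_bij[OF s]] unfolding nb_def by simp
    then have "t y = y" unfolding nb_def by auto
    moreover have "FF cs es y = y" using ev cs(1) cyc_props(4)[OF s] True by blast
    ultimately show ?thesis by simp
  next
    case False
    define c where "c = cycle_through s y"
    have cc: "c \<in> cycles_of n s" using cyc_in[OF s False] c_def by simp
    have ce: "(c, E c) \<in> set (zip cs es)" using zip_map_self cc cs(1) es_def by metis
    have ym: "y \<in> mv c" using ct_mv[OF s False] orb_self c_def by simp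
    have Fy: "FF cs es y = (if E c then c else hinv c) y" using ev ce ym by blast
    show ?thesis
    proof (cases "E c")
      case True
      then show ?thesis using Fy ym unfolding E_def mv_def by simp
    next
      case False
      then obtain z where z: "c z \<noteq> z" "t z \<noteq> c z" unfolding E_def by blast
      have zm: "z \<in> mv c" using z unfolding mv_def by simp
      have tz: "t z \<noteq> s z" using z cyc_props(5)[OF s cc zm] by simp
      have cz: "c = cycle_through s z" using cyc_props(9)[OF s cc zm] .
      have "mv c = orb s z" using ct_mv[OF s cyc_props(4)[OF s cc zm]] cz by simp
      then obtain k where k: "(s ^^ k) z = y" using ym unfolding orb_def by auto
      have "t y \<noteq> s y" using inv_iter[OF tp s e tz, of k] k by simp
      moreover have "t y \<in> nb s y" using e unfolding nb_def by blast
      ultimately have "t y = hinv s y" unfolding nb_def by auto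
      then show ?thesis using Fy False cyc_props(6)[OF s cc ym] by simp
    qed
  qed
  then have "t = FF cs es" by auto
  then show ?thesis unfolding cycle_class_def FF_def using cs len by blast
qed

lemma cc_eq: "s permutes {1..(n::nat)} \<Longrightarrow> cycle_class n s = Cl n s"
  using cc_sub cc_sup by blast


lemma Cl_self: "s permutes {1..n} \<Longrightarrow> s \<in> Cl n s"
  unfolding Cl_def by simp

lemma Cl_same: "t \<in> Cl n s \<Longrightarrow> Cl n t = Cl n s"
  unfolding Cl_def by auto

lemma Cl_disj: "Cl n s \<inter> Cl n s' \<noteq> {} \<Longrightarrow> Cl n s = Cl n s'"
  unfolding Cl_def by auto

lemma Cl_fin: "finite (Cl n s)"
proof -
  have "Cl n s \<subseteq> {p. p permutes {1..n}}" unfolding Cl_def by auto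
  then show ?thesis using finite_permutations[of "{1..n}"] finite_subset by auto
qed

lemma sum_classes_zero:
  fixes h :: "(nat \<Rightarrow> nat) \<Rightarrow> complex"
  assumes X: "\<forall>t\<in>X. t permutes {1..n}" "\<forall>t\<in>X. Cl n t \<subseteq> X" "\<forall>t\<in>X. sum h (Cl n t) = 0"
  shows "sum h X = 0"
proof -
  have XU: "X = \<Union>(Cl n ` X)" using X(1,2) Cl_self by blast
  have "sum h (\<Union>(Cl n ` X)) = (sum \<circ> sum) h (Cl n ` X)"
  proof (rule sum.Union_disjoint)
    show "\<forall>A\<in>Cl n ` X. finite A" using Cl_fin by blast
    show "\<forall>A\<in>Cl n ` X. \<forall>B\<in>Cl n ` X. A \<noteq> B \<longrightarrow> A \<inter> B = {}"
      using Cl_disj by (metis (no_types, lifting) imageE)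
  qed
  also have "\<dots> = sum (sum h) (Cl n ` X)" by simp
  also have "\<dots> = 0" by (rule sum.neutral) (use X(3) in blast)
  finally show ?thesis using XU by simp
qed

definition DD :: "nat \<Rightarrow> ((nat \<Rightarrow> nat) \<Rightarrow> complex) \<Rightarrow> (nat \<Rightarrow> nat \<Rightarrow> complex) \<Rightarrow> complex" where
  "DD n g A = (\<Sum>t\<in>{p. p permutes {1..n}}. g t * (\<Prod>i=1..n. A i (t i)))"

lemma prod_inv:
  assumes t: "t permutes {1..(n::nat)}" and t': "t' permutes {1..n}" and e: "\<forall>i. nb t' i = nb t i"
    and A: "sym_matrix n A"
  shows "(\<Prod>i=1..n. A i (t' i)) = (\<Prod>i=1..n. A i (t i))"
proof -
  define V where "V = {i\<in>{1..n}. t' i \<noteq> t i}"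
  have Vs: "V \<subseteq> {1..n}" unfolding V_def by auto
  have tV: "t' i = hinv t i" if "i \<in> V" for i
    using that e[rule_format, of i] unfolding V_def nb_def by (auto simp: doubleton_eq_iff)
  have "t ` V \<subseteq> V"
  proof
    fix j assume "j \<in> t ` V"
    then obtain i where i: "i \<in> V" "j = t i" by auto
    have "t i \<in> {1..n}" using permutes_in_image[OF t] i Vs by auto
    moreover have "t' (t i) \<noteq> t (t i)" using inv_step[OF t' t e] i unfolding V_def by auto
    ultimately show "j \<in> V" using i unfolding V_def by auto
  qed
  then have "t ` V = V" using endo_inj_surj[of V t] Vs finite_subset permutes_inj[OF t]
    by (meson finite_atLeastAtMost inj_on_subset subset_UNIV)
  then have bV: "bij_betw t V V" using inj_on_subset[OF permutes_inj[OF t] subset_UNIV] unfolding bij_betw_def by blast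
  have hin: "hinv t i \<in> {1..n}" if "i \<in> {1..n}" for i
    using permutes_in_image[OF permutes_inv[OF t]] that by simp
  have "(\<Prod>i=1..n. A i (t' i)) = (\<Prod>i\<in>{1..n}-V. A i (t' i)) * (\<Prod>i\<in>V. A i (t' i))"
    by (rule prod.subset_diff[OF Vs]) simp
  also have "(\<Prod>i\<in>{1..n}-V. A i (t' i)) = (\<Prod>i\<in>{1..n}-V. A i (t i))"
    by (rule prod.cong) (auto simp: V_def)
  also have "(\<Prod>i\<in>V. A i (t' i)) = (\<Prod>i\<in>V. A (hinv t i) i)"
  proof (rule prod.cong)
    fix i assume i: "i \<in> V"
    then have "i \<in> {1..n}" using Vs by auto
    then show "A i (t' i) = A (hinv t i) i" using tV[OF i] A hin unfolding sym_matrix_def by auto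
  qed simp
  also have "\<dots> = (\<Prod>k\<in>V. A (hinv t (t k)) (t k))"
    by (rule prod.reindex_bij_betw[OF bV, symmetric])
  also have "\<dots> = (\<Prod>k\<in>V. A k (t k))" by (simp add: permutes_inverses[OF t])
  also have "(\<Prod>i\<in>{1..n}-V. A i (t i)) * (\<Prod>k\<in>V. A k (t k)) = (\<Prod>i=1..n. A i (t i))"
    by (rule prod.subset_diff[OF Vs, symmetric]) simp
  finally show ?thesis .
qed

lemma L3:
  fixes g :: "(nat \<Rightarrow> nat) \<Rightarrow> complex"
  assumes h: "\<forall>s. s permutes {1..(n::nat)} \<longrightarrow> sum g (Cl n s) = 0" and A: "sym_matrix n A"
  shows "DD n g A = 0"
  unfolding DD_def
proof (rule sum_classes_zero[where n=n])
  show "\<forall>t\<in>{p. p permutes {1..n}}. Cl n t \<subseteq> {p. p permutes {1..n}}" unfolding Cl_def by auto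
  show "\<forall>t\<in>{p. p permutes {1..n}}. (\<Sum>u\<in>Cl n t. g u * (\<Prod>i=1..n. A i (u i))) = 0"
  proof
    fix t assume t: "t \<in> {p. p permutes {1..n}}"
    have "(\<Sum>u\<in>Cl n t. g u * (\<Prod>i=1..n. A i (u i))) = (\<Sum>u\<in>Cl n t. g u * (\<Prod>i=1..n. A i (t i)))"
    proof (rule sum.cong)
      fix u assume "u \<in> Cl n t"
      then have up: "u permutes {1..n}" and ue: "\<forall>i. nb u i = nb t i" unfolding Cl_def by auto
      have tp: "t permutes {1..n}" using t by simp
      show "g u * (\<Prod>i=1..n. A i (u i)) = g u * (\<Prod>i=1..n. A i (t i))"
        using prod_inv[OF tp up ue A] by simp
    qed simp
    also have "\<dots> = sum g (Cl n t) * (\<Prod>i=1..n. A i (t i))" by (simp add: sum_distrib_right)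
    also have "\<dots> = 0" using h t by simp
    finally show "(\<Sum>u\<in>Cl n t. g u * (\<Prod>i=1..n. A i (u i))) = 0" .
  qed
qed simp


definition Nb :: "nat \<Rightarrow> (nat \<Rightarrow> nat) \<Rightarrow> (nat \<Rightarrow> nat) set" where
  "Nb n s = {t. t permutes {1..n} \<and> (\<forall>i. t i \<in> nb s i)}"

definition mu :: "nat \<Rightarrow> (nat \<Rightarrow> nat) \<Rightarrow> nat" where
  "mu n s = card {i\<in>{1..n}. s (s i) \<noteq> i}"

lemma nb_inv:
  assumes s: "s permutes {1..(n::nat)}" and t: "t \<in> Nb n s"
  shows "hinv t i \<in> nb s i"
proof -
  have tp: "t permutes {1..n}" using t unfolding Nb_def by auto
  define k where "k = hinv t i"
  have "t k = i" unfolding k_def using permutes_inverses[OF tp] by simp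
  moreover have "t k \<in> nb s k" using t unfolding Nb_def by auto
  ultimately have "i = s k \<or> i = hinv s k" unfolding nb_def by auto
  then have "k = hinv s i \<or> k = s i" using permutes_inverses[OF s] by auto
  then show ?thesis unfolding nb_def k_def by auto
qed

lemma Cl_Nb: "Cl n s \<subseteq> Nb n s"
  unfolding Cl_def Nb_def nb_def by auto

lemma two_sets: "a \<in> {c, d} \<Longrightarrow> b \<in> {c, d} \<Longrightarrow> a \<noteq> b \<Longrightarrow> {a, b} = {c, d}"
  by auto

lemma Nb_mu:
  assumes s: "s permutes {1..(n::nat)}" and t: "t \<in> Nb n s" and nt: "t \<notin> Cl n s"
  shows "mu n t < mu n s"
proof -
  have tp: "t permutes {1..n}" and tn: "\<And>i. t i \<in> nb s i" using t unfolding Nb_def by auto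
  have ti: "hinv t i \<in> nb s i" for i using nb_inv[OF s t] .
  define At where "At = {i\<in>{1..n}. t (t i) \<noteq> i}"
  define As where "As = {i\<in>{1..n}. s (s i) \<noteq> i}"
  have sub: "At \<subseteq> As"
  proof
    fix i assume i: "i \<in> At"
    show "i \<in> As"
    proof (rule ccontr)
      assume "i \<notin> As"
      then have ss: "s (s i) = i" using i unfolding At_def As_def by auto
      then have hs: "hinv s i = s i" by (simp add: permutes_inv_eq[OF s])
      have "t i \<in> {s i, hinv s i}" using tn[of i] unfolding nb_def .
      then have t1: "t i = s i" using hs by simp
      have hs2: "hinv s (s i) = i" using permutes_inverses(2)[OF s] .
      have "t (s i) \<in> {s (s i), hinv s (s i)}" using tn[of "s i"] unfolding nb_def .
      then have "t (s i) = i" using ss hs2 by simp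
      then have "t (t i) = i" using t1 by simp
      then show False using i unfolding At_def by simp
    qed
  qed
  have neq: "At \<noteq> As"
  proof
    assume eq: "At = As"
    have "nb t i = nb s i" for i
    proof (cases "s (s i) = i")
      case True
      then have hs: "hinv s i = s i" by (simp add: permutes_inv_eq[OF s])
      have "t i \<in> {s i, hinv s i}" "hinv t i \<in> {s i, hinv s i}" using tn[of i] ti[of i] unfolding nb_def by auto
      then show ?thesis unfolding nb_def using hs by simp
    next
      case False
      have "i \<in> {1..n}"
      proof (rule ccontr)
        assume "i \<notin> {1..n}"
        then have "s i = i" by (rule permutes_not_in[OF s])
        then show False using False by simp
      qed
      then have "i \<in> At" using eq False unfolding As_def by blast
      then have tt: "t (t i) \<noteq> i" unfolding At_def by simp
      have d1: "t i \<noteq> hinv t i"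
      proof
        assume "t i = hinv t i"
        then have "t (t i) = t (hinv t i)" by simp
        also have "\<dots> = i" using permutes_inverses(1)[OF tp] .
        finally show False using tt by simp
      qed
      have d2: "s i \<noteq> hinv s i"
      proof
        assume "s i = hinv s i"
        then have "s (s i) = s (hinv s i)" by simp
        also have "\<dots> = i" using permutes_inverses(1)[OF s] .
        finally show False using False by simp
      qed
      have m1: "t i \<in> {s i, hinv s i}" and m2: "hinv t i \<in> {s i, hinv s i}"
        using tn[of i] ti[of i] unfolding nb_def by auto
      show ?thesis unfolding nb_def by (rule two_sets[OF m1 m2 d1])
    qed
    then show False using nt tp unfolding Cl_def by blast
  qed
  have "finite As" unfolding As_def by simp
  then have "card At < card As" using sub neq psubset_card_mono by blast
  then show ?thesis unfolding mu_def At_def As_def .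
qed

lemma Nb_closed:
  assumes s: "s permutes {1..(n::nat)}" and t: "t \<in> Nb n s - Cl n s" and t': "t' \<in> Cl n t"
  shows "t' \<in> Nb n s - Cl n s"
proof -
  have tp': "t' permutes {1..n}" and e: "\<And>i. nb t' i = nb t i" using t' unfolding Cl_def by auto
  have tN: "t \<in> Nb n s" using t by simp
  have "t' i \<in> nb s i" for i
  proof -
    have "t' i \<in> nb t' i" unfolding nb_def by simp
    then have "t' i \<in> {t i, hinv t i}" using e[of i] unfolding nb_def by simp
    moreover have "t i \<in> nb s i" using tN unfolding Nb_def by auto
    moreover have "hinv t i \<in> nb s i" using nb_inv[OF s tN] .
    ultimately show ?thesis by auto
  qed
  then have "t' \<in> Nb n s" using tp' unfolding Nb_def by auto
  moreover have "t' \<notin> Cl n s"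
  proof
    assume "t' \<in> Cl n s"
    then have "Cl n t' = Cl n s" by (rule Cl_same)
    moreover have "Cl n t' = Cl n t" using t' by (rule Cl_same)
    moreover have "t \<in> Cl n t" using tN unfolding Nb_def by (auto intro: Cl_self)
    ultimately have "t \<in> Cl n s" by simp
    then show False using t by simp
  qed
  ultimately show ?thesis by blast
qed

lemma prod_ind: "finite I \<Longrightarrow> (\<Prod>i\<in>I. (if P i then 1 else 0 :: complex)) = (if \<forall>i\<in>I. P i then 1 else 0)"
  by (induction I rule: finite_induct) auto

lemma DD_S:
  assumes s: "s permutes {1..(n::nat)}"
  shows "DD n g (S_mat s) = sum g (Nb n s)"
proof -
  have key: "(\<Prod>i=1..n. S_mat s i (t i)) = (if t \<in> Nb n s then 1 else 0)" if t: "t permutes {1..n}" for t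
  proof -
    have "(\<Prod>i=1..n. S_mat s i (t i)) = (\<Prod>i=1..n. (if t i \<in> nb s i then 1 else 0 :: complex))"
    proof (rule prod.cong)
      fix i
      show "S_mat s i (t i) = (if t i \<in> nb s i then 1 else 0)"
        unfolding S_mat_def nb_def by (simp add: eq_commute)
    qed simp
    also have "\<dots> = (if \<forall>i\<in>{1..n}. t i \<in> nb s i then 1 else 0)" by (rule prod_ind) simp
    also have "(\<forall>i\<in>{1..n}. t i \<in> nb s i) = (t \<in> Nb n s)"
    proof -
      have "t i \<in> nb s i" if "i \<notin> {1..n}" for i
        using permutes_not_in[OF t that] permutes_not_in[OF s that] by (simp add: nb_def)
      then have "(\<forall>i\<in>{1..n}. t i \<in> nb s i) = (\<forall>i. t i \<in> nb s i)" by blast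
      then show ?thesis using t unfolding Nb_def by simp
    qed
    finally show ?thesis .
  qed
  have "DD n g (S_mat s) = (\<Sum>t\<in>{p. p permutes {1..n}}. (if t \<in> Nb n s then g t else 0))"
    unfolding DD_def
  proof (rule sum.cong)
    fix t assume "t \<in> {p. p permutes {1..n}}"
    then have "t permutes {1..n}" by simp
    then show "g t * (\<Prod>i=1..n. S_mat s i (t i)) = (if t \<in> Nb n s then g t else 0)"
      using key by simp
  qed simp
  also have "\<dots> = sum g ({p. p permutes {1..n}} \<inter> Nb n s)"
    by (rule sum.inter_restrict[symmetric]) (simp add: finite_permutations)
  also have "{p. p permutes {1..n}} \<inter> Nb n s = Nb n s" unfolding Nb_def by blast
  finally show ?thesis .
qed

lemma L4:
  fixes g :: "(nat \<Rightarrow> nat) \<Rightarrow> complex"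
  assumes h: "\<forall>s. s permutes {1..(n::nat)} \<longrightarrow> DD n g (S_mat s) = 0"
  shows "s permutes {1..n} \<longrightarrow> sum g (Cl n s) = 0"
proof (induction s rule: measure_induct_rule[of "mu n"])
  case (less s)
  show ?case
  proof
    assume s: "s permutes {1..n}"
    have fin: "finite (Nb n s)"
      using finite_permutations[of "{1..n}"] finite_subset[of "Nb n s"] unfolding Nb_def by auto
    have "sum g (Nb n s - Cl n s) = 0"
    proof (rule sum_classes_zero[where n=n])
      show "\<forall>t\<in>Nb n s - Cl n s. t permutes {1..n}" unfolding Nb_def by auto
      show "\<forall>t\<in>Nb n s - Cl n s. Cl n t \<subseteq> Nb n s - Cl n s" using Nb_closed[OF s] by blast
      show "\<forall>t\<in>Nb n s - Cl n s. sum g (Cl n t) = 0"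
      proof
        fix t assume t: "t \<in> Nb n s - Cl n s"
        then have "mu n t < mu n s" using Nb_mu[OF s] by blast
        moreover have "t permutes {1..n}" using t unfolding Nb_def by auto
        ultimately show "sum g (Cl n t) = 0" using less by blast
      qed
    qed
    moreover have "sum g (Nb n s) = sum g (Nb n s - Cl n s) + sum g (Cl n s)"
      by (rule sum.subset_diff[OF Cl_Nb fin])
    moreover have "sum g (Nb n s) = 0" using h[rule_format, OF s] DD_S[OF s, of g] by simp
    ultimately show "sum g (Cl n s) = 0" by simp
  qed
qed


lemma S_sym:
  assumes s: "s permutes {1..(n::nat)}"
  shows "sym_matrix n (S_mat s)"
proof -
  have "S_mat s i j = S_mat s j i" for i j
  proof -
    have "(hinv s i = j) = (s j = i)" by (rule permutes_inv_eq[OF s])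
    moreover have "(hinv s j = i) = (s i = j)" by (rule permutes_inv_eq[OF s])
    ultimately have "(s i = j \<or> hinv s i = j) = (s j = i \<or> hinv s j = i)" by blast
    then show ?thesis unfolding S_mat_def by simp
  qed
  then show ?thesis unfolding sym_matrix_def by blast
qed

theorem mainTheorem6:
  fixes n :: nat and H K :: "(nat \<Rightarrow> nat) set"
    and phi psi :: "(nat \<Rightarrow> nat) \<Rightarrow> complex"
  assumes "n \<ge> 1"
    and "subgroup H (sym_group n)" and "subgroup K (sym_group n)"
  shows "((\<forall>A. sym_matrix n A \<longrightarrow> gen_matrix_fun n H phi A = gen_matrix_fun n K psi A)
           \<longleftrightarrow> (\<forall>s\<in>carrier (sym_group n).
                 gen_matrix_fun n H phi (S_mat s) = gen_matrix_fun n K psi (S_mat s)))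
       \<and> ((\<forall>s\<in>carrier (sym_group n).
                 gen_matrix_fun n H phi (S_mat s) = gen_matrix_fun n K psi (S_mat s))
           \<longleftrightarrow> (\<forall>s\<in>carrier (sym_group n).
                 (\<Sum>t\<in>cycle_class n s. ext0 H phi t) = (\<Sum>t\<in>cycle_class n s. ext0 K psi t)))"
proof -
  define g where "g t = ext0 H phi t - ext0 K psi t" for t
  have Sn: "carrier (sym_group n) = {p. p permutes {1..n}}" by (simp add: sym_group_def)
  have gd: "gen_matrix_fun n H phi A - gen_matrix_fun n K psi A = DD n g A" for A
    unfolding gen_matrix_fun_def DD_def Sn g_def
    by (simp add: sum_subtractf[symmetric] left_diff_distrib)
  have E1: "(gen_matrix_fun n H phi A = gen_matrix_fun n K psi A) = (DD n g A = 0)" for A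
    using gd[of A] by (metis eq_iff_diff_eq_0)
  have E2: "((\<Sum>t\<in>cycle_class n s. ext0 H phi t) = (\<Sum>t\<in>cycle_class n s. ext0 K psi t))
      = (sum g (Cl n s) = 0)" if s: "s permutes {1..n}" for s
  proof -
    have "(\<Sum>t\<in>cycle_class n s. ext0 H phi t) - (\<Sum>t\<in>cycle_class n s. ext0 K psi t) = sum g (Cl n s)"
      unfolding cc_eq[OF s] g_def by (simp add: sum_subtractf)
    then show ?thesis by (metis eq_iff_diff_eq_0)
  qed
  define P1 where "P1 = (\<forall>A. sym_matrix n A \<longrightarrow> DD n g A = 0)"
  define P2 where "P2 = (\<forall>s. s permutes {1..n} \<longrightarrow> DD n g (S_mat s) = 0)"
  define P3 where "P3 = (\<forall>s. s permutes {1..n} \<longrightarrow> sum g (Cl n s) = 0)"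
  have Q1: "(\<forall>A. sym_matrix n A \<longrightarrow> gen_matrix_fun n H phi A = gen_matrix_fun n K psi A) = P1"
    unfolding P1_def E1 by simp
  have Q2: "(\<forall>s\<in>carrier (sym_group n).
                 gen_matrix_fun n H phi (S_mat s) = gen_matrix_fun n K psi (S_mat s)) = P2"
    unfolding P2_def E1 Sn by simp
  have Q3: "(\<forall>s\<in>carrier (sym_group n).
                 (\<Sum>t\<in>cycle_class n s. ext0 H phi t) = (\<Sum>t\<in>cycle_class n s. ext0 K psi t)) = P3"
    unfolding P3_def Sn using E2 by auto
  have I12: "P1 \<Longrightarrow> P2" unfolding P1_def P2_def using S_sym by blast
  have I23: "P2 \<Longrightarrow> P3" unfolding P2_def P3_def using L4 by blast
  have I31: "P3 \<Longrightarrow> P1" unfolding P1_def P3_def using L3 by blast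
  show ?thesis unfolding Q1 Q2 Q3 using I12 I23 I31 by blast
qed

end
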